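(* Let $\rho_0$ be a two-qubit state whose reduced state $\rho_B=\mathrm{Tr}_A[\rho_0]$ on Bob's side is of full rank, and let $$\rho=\frac{1}{4}\Big(\mathbb{1}\otimes\mathbb{1}+\vec{a}\cdot\vec{\sigma}\otimes \mathbb{1}+\sum_{i=x,y,z}T_{i}\,\sigma_{i}\otimes\sigma_{i}\Big)$$ be a canonical form of $\rho_0$ (as defined in the context), with $T=\mathrm{diag}(T_x,T_y,T_z)$. If $$\max_{\hat{x}\in\mathbb{R}^3,\ \|\hat x\|=1} \Big[(\vec{a}\cdot\hat{x})^2+2\,\|T\hat{x}\|\Big] \leq 1,$$ where $\|\cdot\|$ is the Euclidean norm, then $\rho$ is unsteerable from Alice to Bob for arbitrary projective measurements.
   Context: Notation: $\vec\sigma=(\sigma_x,\sigma_y,\sigma_z)$ are the Pauli matrices. Canonical form: given a two-qubit state $\rho_0$ with $\rho_B=\mathrm{Tr}_A\rho_0$ invertible, first form $\rho_1=(\mathbb{1}\otimes\rho_B^{-1/2})\rho_0(\mathbb{1}\otimes\rho_B^{-1/2})/\mathrm{Tr}[(\mathbb{1}\otimes\rho_B^{-1/2})\rho_0(\mathbb{1}\otimes\rho_B^{-1/2})]$, a two-qubit state whose Bob marginal is $\mathbb{1}/2$; then apply local unitaries $U_A\otimes U_B$ so that, in the expansion $\frac14(\mathbb{1}\otimes\mathbb{1}+\vec a\cdot\vec\sigma\otimes\mathbb{1}+\vec b\cdot\vec\sigma\,\otimes... )$ in the local Pauli basis, Bob's local Bloch vector is $0$ and the correlation matrix $T_{ij}=\mathrm{Tr}[\rho\,\sigma_i\otimes\sigma_j]$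 is diagonal; the resulting state $\rho$ has the displayed form. Steering: for a bipartite state $\rho$ and measurements on Alice's side given by POVMs $\{M_{a|x}\}_a$, the assemblage is $\sigma_{a|x}=\mathrm{Tr}_A[(M_{a|x}\otimes\mathbb{1})\rho]$. The state $\rho$ is unsteerable from Alice to Bob for projective measurements if there exist a family of positive semidefinite operators $\{\sigma_\lambda\}$ on Bob's qubit with $\int\mathrm{Tr}\,\sigma_\lambda\,d\lambda=1$ and, for every projective measurement $x$ of Alice (i.e. $M_{\pm|\hat x}=(\mathbb{1}\pm\hat x\cdot\vec\sigma)/2$ for any unit vector $\hat x$, together with trivial measurements) and outcome $a$, response probabilities $p(a|x,\lambda)\ge0$ with $\sum_a p(a|x,\lambda)=1$, such that $\sigma_{a|x}=\int \sigma_\lambda\,p(a|x,\lambda)\,d\lambda$ for all $a,x$ (a single local hidden state model for all projective measurements simultaneously). *)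

theory Defs
  imports "HOL-Analysis.Analysis"
begin

text \<open>Qubit operators: complex 2x2 matrices indexed by the two-element type 2.
  Two-qubit operators: complex matrices indexed by 2 \<times> 2 (first component = Alice,
  second component = Bob).\<close>

type_synonym qop = "complex^2^2"
type_synonym qqop = "complex^(2 \<times> 2)^(2 \<times> 2)"

definition cmat_scale :: "complex \<Rightarrow> complex^'n^'m \<Rightarrow> complex^'n^'m" where
  "cmat_scale c A = (\<chi> i j. c * A$i$j)"

definition adj :: "complex^'n^'m \<Rightarrow> complex^'m^'n" where
  "adj A = (\<chi> i j. cnj (A$j$i))"

definition hermitian :: "complex^'n^'n \<Rightarrow> bool" where
  "hermitian A \<longleftrightarrow> adj A = A"

definition psd :: "complex^'n^'n \<Rightarrow> bool" where
  "psd A \<longleftrightarrow> hermitian A \<and>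
     (\<forall>v::complex^'n. 0 \<le> Re (\<Sum>i\<in>UNIV. cnj (v$i) * (A *v v)$i))"

definition posdef :: "complex^'n^'n \<Rightarrow> bool" where
  "posdef A \<longleftrightarrow> hermitian A \<and>
     (\<forall>v::complex^'n. v \<noteq> 0 \<longrightarrow> 0 < Re (\<Sum>i\<in>UNIV. cnj (v$i) * (A *v v)$i))"

definition unitary :: "complex^'n^'n \<Rightarrow> bool" where
  "unitary U \<longleftrightarrow> adj U ** U = mat 1"

definition is_state :: "complex^'n^'n \<Rightarrow> bool" where
  "is_state \<rho> \<longleftrightarrow> psd \<rho> \<and> trace \<rho> = 1"

definition kron :: "qop \<Rightarrow> qop \<Rightarrow> qqop" where
  "kron A B = (\<chi> r c. A$(fst r)$(fst c) * B$(snd r)$(snd c))"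

definition ptraceA :: "qqop \<Rightarrow> qop" where
  "ptraceA \<rho> = (\<chi> j l. \<Sum>i\<in>UNIV. \<rho>$(i,j)$(i,l))"

text \<open>Pauli matrices, indexed by the type 3 (1 = x, 2 = y, 3 = z).\<close>
definition sigma_x :: qop where
  "sigma_x = (\<chi> r c. if r \<noteq> c then 1 else 0)"
definition sigma_y :: qop where
  "sigma_y = (\<chi> r c. if r = 1 \<and> c = 2 then - \<i> else if r = 2 \<and> c = 1 then \<i> else 0)"
definition sigma_z :: qop where
  "sigma_z = (\<chi> r c. if r = c then (if r = 1 then 1 else -1) else 0)"

definition pauli :: "3 \<Rightarrow> qop" where
  "pauli i = (if i = 1 then sigma_x else if i = 2 then sigma_y else sigma_z)"

definition pdot :: "real^3 \<Rightarrow> qop" where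
  "pdot n = (\<Sum>i\<in>UNIV. cmat_scale (complex_of_real (n$i)) (pauli i))"

definition canon_state :: "real^3 \<Rightarrow> real^3 \<Rightarrow> qqop" where
  "canon_state a T = cmat_scale (1/4)
     (mat 1 + kron (pdot a) (mat 1)
      + (\<Sum>i\<in>UNIV. cmat_scale (complex_of_real (T$i)) (kron (pauli i) (pauli i))))"

text \<open>rho is a canonical form of rho0: S = rho_B^{-1/2} (the positive definite matrix
  with S S rho_B = 1), rho1 = (1 \<otimes> S) rho0 (1 \<otimes> S) / Tr[...], and
  rho = (U_A \<otimes> U_B) rho1 (U_A \<otimes> U_B)^dagger for local unitaries.
  (That rho has the displayed form is imposed separately in the theorem.)\<close>
definition canonical_form_of :: "qqop \<Rightarrow> qqop \<Rightarrow> bool" where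
  "canonical_form_of \<rho>0 \<rho> \<longleftrightarrow>
     (\<exists>S UA UB :: qop.
        posdef S \<and> S ** S ** ptraceA \<rho>0 = mat 1 \<and> unitary UA \<and> unitary UB \<and>
        (let K = kron (mat 1) S; X = K ** \<rho>0 ** K; \<rho>1 = cmat_scale (1 / trace X) X;
             U = kron UA UB
         in \<rho> = U ** \<rho>1 ** adj U))"

definition proj_meas :: "real^3 \<Rightarrow> bool \<Rightarrow> qop" where
  "proj_meas x b = cmat_scale (1/2) (mat 1 + cmat_scale (if b then 1 else -1) (pdot x))"

definition assemblage :: "qqop \<Rightarrow> qop \<Rightarrow> qop" where
  "assemblage \<rho> M = ptraceA (kron M (mat 1) ** \<rho>)"

definition LHS_model_proj :: "(real^3) measure \<Rightarrow> (real^3 \<Rightarrow> qop) \<Rightarrow>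
     (real^3 \<Rightarrow> bool \<Rightarrow> real^3 \<Rightarrow> real) \<Rightarrow> qqop \<Rightarrow> bool" where
  "LHS_model_proj M \<sigma> p \<rho> \<longleftrightarrow>
     (\<forall>l\<in>space M. psd (\<sigma> l)) \<and>
     integrable M \<sigma> \<and>
     (LINT l|M. trace (\<sigma> l)) = 1 \<and>
     (\<forall>x b. \<forall>l\<in>space M. 0 \<le> p x b l) \<and>
     (\<forall>x. \<forall>l\<in>space M. p x True l + p x False l = 1) \<and>
     (\<forall>x b. norm x = 1 \<longrightarrow>
        integrable M (\<lambda>l. p x b l *\<^sub>R \<sigma> l) \<and>
        assemblage \<rho> (proj_meas x b) = (LINT l|M. p x b l *\<^sub>R \<sigma> l)) \<and>
     assemblage \<rho> (mat 1) = (LINT l|M. \<sigma> l)"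

definition unsteerable_proj :: "qqop \<Rightarrow> bool" where
  "unsteerable_proj \<rho> \<longleftrightarrow> (\<exists>M \<sigma> p. LHS_model_proj M \<sigma> p \<rho>)"

end

theory Submission
  imports Defs "HOL-Probability.Distribution_Functions"
begin


lemma cmat_scale_ofreal: "cmat_scale (complex_of_real r) A = r *\<^sub>R A"
  unfolding cmat_scale_def vec_eq_iff
  by (simp only: vector_scaleR_component vec_lambda_beta) (simp add: scaleR_conv_of_real)

lemma kron_mult: "kron A B ** kron C D = kron (A ** C) (B ** D)"
proof -
  have "(kron A B ** kron C D) $ r $ c = kron (A ** C) (B ** D) $ r $ c" for r c
  proof -
    have "(kron A B ** kron C D) $ r $ c = (\<Sum>k\<in>UNIV. \<Sum>l\<in>UNIV.
          A$(fst r)$k * B$(snd r)$l * (C$k$(fst c) * D$l$(snd c)))"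
      unfolding matrix_matrix_mult_def kron_def
      by (simp add: UNIV_Times_UNIV[symmetric] sum.cartesian_product split_beta del: UNIV_Times_UNIV)
    also have "\<dots> = (\<Sum>k\<in>UNIV. A$(fst r)$k * C$k$(fst c)) * (\<Sum>l\<in>UNIV. B$(snd r)$l * D$l$(snd c))"
      by (simp add: sum_product algebra_simps)
    finally show ?thesis by (simp add: kron_def matrix_matrix_mult_def)
  qed
  then show ?thesis by (simp add: vec_eq_iff)
qed

lemma ptraceA_kron: "ptraceA (kron A B) = cmat_scale (trace A) B"
  by (simp add: ptraceA_def kron_def cmat_scale_def vec_eq_iff trace_def sum_distrib_right)

lemma ptraceA_add: "ptraceA (X + Y) = ptraceA X + ptraceA Y"
  by (simp add: ptraceA_def vec_eq_iff sum.distrib)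

lemma ptraceA_scale: "ptraceA (cmat_scale c X) = cmat_scale c (ptraceA X)"
  by (simp add: ptraceA_def vec_eq_iff cmat_scale_def sum_distrib_left)

lemma ptraceA_sum: "ptraceA (\<Sum>i\<in>S. f i) = (\<Sum>i\<in>S. ptraceA (f i))"
  by (induction S rule: infinite_finite_induct) (auto simp: ptraceA_add ptraceA_def vec_eq_iff sum.distrib)

lemma mult_scale: "A ** cmat_scale c X = cmat_scale c (A ** X)"
  by (simp add: matrix_matrix_mult_def cmat_scale_def vec_eq_iff sum_distrib_left algebra_simps)

lemma mult_sum: "A ** (\<Sum>i\<in>S. f i) = (\<Sum>i\<in>S. A ** f i)"
  by (induction S rule: infinite_finite_induct) (auto simp: matrix_add_ldistrib)

lemma kron_id: "(mat 1 :: qqop) = kron (mat 1) (mat 1)"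
  by (auto simp: kron_def vec_eq_iff mat_def prod_eq_iff)


lemma two_ne_one2[simp]: "(2::2) \<noteq> 1" "(1::2) \<noteq> 2" by (simp_all add: numeral_eq_iff)  

lemmas pauli_simps = pauli_def sigma_x_def sigma_y_def sigma_z_def

lemma pdot_entries:
  "pdot n $ 1 $ 1 = complex_of_real (n$3)"
  "pdot n $ 2 $ 2 = - complex_of_real (n$3)"
  "pdot n $ 1 $ 2 = Complex (n$1) (- n$2)"
  "pdot n $ 2 $ 1 = Complex (n$1) (n$2)"
  by (simp_all add: pdot_def sum_3 pauli_simps cmat_scale_def complex_eq_iff)

lemma trace_proj_pdot: "trace (proj_meas x b ** pdot a) = (if b then 1 else -1) * complex_of_real (a \<bullet> x)"
  by (simp add: trace_def sum_2 matrix_matrix_mult_def proj_meas_def cmat_scale_def mat_def pdot_entries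
     inner_vec_def sum_3 complex_eq_iff algebra_simps) (simp add: field_simps)

lemma trace_proj_pauli: "trace (proj_meas x b ** pauli i) = (if b then 1 else -1) * complex_of_real (x$i)"
  using exhaust_3[of i]
  apply (elim disjE)
  apply (simp_all add: trace_def sum_2 matrix_matrix_mult_def proj_meas_def cmat_scale_def mat_def pdot_entries
    pauli_simps complex_eq_iff algebra_simps)
  done

lemma trace_proj: "trace (proj_meas x b) = 1"
  by (simp add: trace_def sum_2 proj_meas_def cmat_scale_def mat_def pdot_entries) (simp add: field_simps)


definition BF :: "real \<Rightarrow> (3 \<Rightarrow> real) \<Rightarrow> qop" where
  "BF \<alpha> v = \<alpha> *\<^sub>R mat 1 + (\<Sum>i\<in>UNIV. v i *\<^sub>R pauli i)"

lemma assemb_canon: "assemblage (canon_state a T) M =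
   cmat_scale (1/4) (cmat_scale (trace M + trace (M ** pdot a)) (mat 1) +
     (\<Sum>i\<in>UNIV. cmat_scale (complex_of_real (T$i) * trace (M ** pauli i)) (pauli i)))"
proof -
  have e1: "kron M (mat 1) ** kron (mat 1) (mat 1) = kron M (mat 1)" by (simp add: kron_mult)
  have e2: "kron M (mat 1) ** kron (pdot a) (mat 1) = kron (M ** pdot a) (mat 1)" by (simp add: kron_mult)
  have e3: "kron M (mat 1) ** cmat_scale (complex_of_real (T $ i)) (kron (pauli i) (pauli i)) =
     cmat_scale (complex_of_real (T $ i)) (kron (M ** pauli i) (pauli i))" for i
    by (simp add: kron_mult mult_scale)
  have sc: "cmat_scale c (cmat_scale d X) = cmat_scale (c*d) X" for c d and X :: qop
    by (simp add: cmat_scale_def vec_eq_iff)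
  have ad: "cmat_scale c X + cmat_scale d X = cmat_scale (c+d) X" for c d and X :: qop
    by (simp add: cmat_scale_def vec_eq_iff algebra_simps)
  show ?thesis
    unfolding assemblage_def canon_state_def
    by (simp add: mult_scale matrix_add_ldistrib mult_sum kron_id[symmetric] e2 e3 ptraceA_add ptraceA_scale
      ptraceA_sum ptraceA_kron sc ad del: kron_id) (simp add: kron_id e1 ptraceA_kron kron_mult sc)
qed


lemma scaleR_entry: "((r::real) *\<^sub>R (A::qop)) $ i $ j = complex_of_real r * A $ i $ j"
  by (simp only: vector_scaleR_component) (simp add: scaleR_conv_of_real)

lemma sum_entry: "(\<Sum>k\<in>S. (f k :: qop)) $ i $ j = (\<Sum>k\<in>S. f k $ i $ j)"
  by (induction S rule: infinite_finite_induct) auto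

lemma BF_entries:
  "BF \<alpha> v $ 1 $ 1 = complex_of_real (\<alpha> + v 3)"
  "BF \<alpha> v $ 2 $ 2 = complex_of_real (\<alpha> - v 3)"
  "BF \<alpha> v $ 1 $ 2 = Complex (v 1) (- v 2)"
  "BF \<alpha> v $ 2 $ 1 = Complex (v 1) (v 2)"
  by (simp_all add: BF_def sum_entry scaleR_entry sum_3 pauli_simps mat_def complex_eq_iff)

lemma BF_eqI: "(\<And>i j. X $ i $ j = BF \<alpha> v $ i $ j) \<Longrightarrow> X = BF \<alpha> v"
  by (simp add: vec_eq_iff)

lemma conv_BF: "cmat_scale (1/4) (cmat_scale (complex_of_real \<alpha>) (mat 1) +
     (\<Sum>i\<in>UNIV. cmat_scale (complex_of_real (\<beta> i)) (pauli i))) = BF (\<alpha>/4) (\<lambda>i. \<beta> i/4)"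
  apply (rule BF_eqI)
  subgoal for i j
    using exhaust_2[of i] exhaust_2[of j]
    by (elim disjE) (simp_all add: BF_entries cmat_scale_def sum_entry sum_3 pauli_simps mat_def complex_eq_iff)
  done

lemma assemb_proj: "assemblage (canon_state a T) (proj_meas x b) =
  BF ((1 + (if b then 1 else -1) * (a \<bullet> x))/4) (\<lambda>i. (if b then 1 else -1) * T$i * x$i / 4)"
proof -
  have "assemblage (canon_state a T) (proj_meas x b) = cmat_scale (1/4) (cmat_scale (complex_of_real (1 + (if b then 1 else -1) * (a \<bullet> x))) (mat 1) +
     (\<Sum>i\<in>UNIV. cmat_scale (complex_of_real ((if b then 1 else -1) * T$i * x$i)) (pauli i)))"
    unfolding assemb_canon trace_proj trace_proj_pdot trace_proj_pauli
    by (cases b) (simp_all add: algebra_simps)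
  also have "\<dots> = BF ((1 + (if b then 1 else -1) * (a \<bullet> x))/4) (\<lambda>i. (if b then 1 else -1) * T$i * x$i / 4)"
    by (rule conv_BF)
  finally show ?thesis .
qed

lemma assemb_id: "assemblage (canon_state a T) (mat 1) = BF (1/2) (\<lambda>i. 0)"
proof -
  have t1: "trace (mat 1 :: qop) = 2" by (simp add: trace_def sum_2 mat_def)
  have t2: "trace (mat 1 ** pdot a) = 0" by (simp add: trace_def sum_2 pdot_entries)
  have t3: "trace (mat 1 ** pauli i) = 0" for i
    using exhaust_3[of i] by (elim disjE) (simp_all add: trace_def sum_2 pauli_simps)
  have "assemblage (canon_state a T) (mat 1) = cmat_scale (1/4) (cmat_scale (complex_of_real 2) (mat 1) +
     (\<Sum>i\<in>UNIV. cmat_scale (complex_of_real 0) (pauli i)))"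
    unfolding assemb_canon t1 t2 t3 by simp
  also have "\<dots> = BF (2/4) (\<lambda>i. 0/4)" by (rule conv_BF)
  finally show ?thesis by simp
qed


lemma quad_nonneg:
  fixes al v1 v2 v3 a b c d :: real
  assumes "v1^2 + v2^2 + v3^2 \<le> al^2" "0 \<le> al"
  shows "0 \<le> (al + v3) * (a^2 + b^2) + (al - v3) * (c^2 + d^2) + 2 * v1 * (a*c + b*d) + 2 * v2 * (a*d - b*c)"
proof -
  let ?Q = "(al + v3) * (a^2 + b^2) + (al - v3) * (c^2 + d^2) + 2 * v1 * (a*c + b*d) + 2 * v2 * (a*d - b*c)"
  have v3: "\<bar>v3\<bar> \<le> al"
  proof -
    have "v3^2 \<le> al^2" using assms(1) by (smt (verit) zero_le_power2)
    then show ?thesis using assms(2) by (metis abs_of_nonneg power2_le_imp_le real_sqrt_abs real_sqrt_le_mono)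
  qed
  define s where "s = al + v3"
  have s0: "0 \<le> s" using v3 s_def by linarith
  show ?thesis
  proof (cases "s = 0")
    case True
    then have "v3 = - al" by (simp add: s_def)
    then have "v1^2 + v2^2 \<le> 0" using assms(1) by simp
    then have "v1 = 0" "v2 = 0" by (smt (verit) zero_le_power2 power_zero_numeral zero_eq_power2)+
    then show ?thesis using \<open>v3 = - al\<close> assms(2) by simp
  next
    case False
    with s0 have sp: "0 < s" by simp
    have key: "s * ?Q = (s*a + v1*c + v2*d)^2 + (s*b + v1*d - v2*c)^2 + (s*(al - v3) - v1^2 - v2^2)*(c^2+d^2)"
      unfolding s_def by (simp add: power2_eq_square algebra_simps)
    have "s*(al - v3) - v1^2 - v2^2 \<ge> 0" using assms(1) unfolding s_def by (simp add: power2_eq_square algebra_simps)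
    then have "0 \<le> s * ?Q" unfolding key by (intro add_nonneg_nonneg mult_nonneg_nonneg) auto
    then show ?thesis using sp by (simp add: zero_le_mult_iff)
  qed
qed

lemma psd_BF:
  assumes "(v 1)^2 + (v 2)^2 + (v 3)^2 \<le> al^2" "0 \<le> al"
  shows "psd (BF al v)"
  unfolding psd_def hermitian_def
proof
  show "adj (BF al v) = BF al v"
    unfolding adj_def vec_eq_iff forall_2 by (simp add: BF_entries complex_eq_iff)
  show "\<forall>x::complex^2. 0 \<le> Re (\<Sum>i\<in>UNIV. cnj (x $ i) * (BF al v *v x) $ i)"
  proof
    fix x :: "complex^2"
    have "Re (\<Sum>i\<in>UNIV. cnj (x $ i) * (BF al v *v x) $ i) =
      (al + v 3) * ((Re (x$1))^2 + (Im (x$1))^2) + (al - v 3) * ((Re (x$2))^2 + (Im (x$2))^2)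
       + 2 * v 1 * (Re (x$1)*Re (x$2) + Im (x$1)*Im (x$2)) + 2 * v 2 * (Re (x$1)*Im (x$2) - Im (x$1)*Re (x$2))"
      by (simp add: sum_2 matrix_vector_mult_def BF_entries power2_eq_square algebra_simps)
    then show "0 \<le> Re (\<Sum>i\<in>UNIV. cnj (x $ i) * (BF al v *v x) $ i)"
      using quad_nonneg[OF assms] by simp
  qed
qed


type_synonym E = "real \<times> real \<times> real"

definition W :: "real^3 \<Rightarrow> E" where "W l = (l$1, l$2, l$3)"
definition W' :: "E \<Rightarrow> real^3" where "W' e = vector [fst e, fst (snd e), snd (snd e)]"

lemma basis_E: "(Basis :: E set) = {(1,0,0), (0,1,0), (0,0,1)}"
  by (auto simp: Basis_prod_def zero_prod_def)

lemma prod_basis_E: "(\<Prod>b\<in>(Basis::E set). f b) = f (1,0,0) * f (0,1,0) * f (0,0,1)"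
  by (simp add: basis_E mult.assoc)

lemma prod_UNIV3: "(\<Prod>i\<in>(UNIV::3 set). f i) = f 1 * f 2 * f 3"
  unfolding UNIV_3 by (simp add: ac_simps)

lemma W_meas[measurable]: "W \<in> borel_measurable borel"
  unfolding W_def by measurable

lemma W_box: "W -` box l u = box (W' l) (W' u)"
proof (rule set_eqI)
  fix x :: "real^3"
  have "x \<in> W -` box l u \<longleftrightarrow> (\<forall>b\<in>Basis. l \<bullet> b < W x \<bullet> b \<and> W x \<bullet> b < u \<bullet> b)"
    by (simp add: mem_box)
  also have "\<dots> \<longleftrightarrow> (fst l < x$1 \<and> x$1 < fst u) \<and> (fst (snd l) < x$2 \<and> x$2 < fst (snd u)) \<and> (snd (snd l) < x$3 \<and> x$3 < snd (snd u))"
    by (simp add: basis_E inner_prod_def W_def)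
  also have "\<dots> \<longleftrightarrow> (\<forall>i. W' l $ i < x $ i \<and> x $ i < W' u $ i)"
    by (simp add: forall_3 W'_def vector_3)
  also have "\<dots> \<longleftrightarrow> x \<in> box (W' l) (W' u)" by (simp add: mem_box_cart)
  finally show "x \<in> W -` box l u \<longleftrightarrow> x \<in> box (W' l) (W' u)" .
qed

lemma lborel3_box: fixes p q :: "real^3" assumes "p$1 \<le> q$1" "p$2 \<le> q$2" "p$3 \<le> q$3"
  shows "emeasure lborel (box p q) = ennreal ((q$1 - p$1) * (q$2 - p$2) * (q$3 - p$3))"
proof -
  have "emeasure lborel (box p q) = emeasure lborel (cbox p q)"
    by (simp add: emeasure_lborel_box_eq emeasure_lborel_cbox_eq)
  also have "\<dots> = ennreal (measure lborel (cbox p q))"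
    by (simp add: emeasure_eq_measure2 emeasure_lborel_cbox_finite)
  also have "measure lborel (cbox p q) = (\<Prod>i\<in>UNIV. q$i - p$i)"
  proof (intro content_cbox_cart)
    have "\<forall>i. p$i \<le> q$i" using assms exhaust_3 by metis
    then show "cbox p q \<noteq> {}" by (auto simp: interval_ne_empty_cart)
  qed
  finally show ?thesis by (simp add: prod_UNIV3 mult.assoc)
qed

lemma lborel_transfer: "distr lborel borel W = (lborel :: E measure)"
proof (rule lborel_eqI[symmetric])
  fix l u :: E
  assume lu: "\<And>b. b \<in> Basis \<Longrightarrow> l \<bullet> b \<le> u \<bullet> b"
  have le: "fst l \<le> fst u" "fst (snd l) \<le> fst (snd u)" "snd (snd l) \<le> snd (snd u)"
    using lu[of "(1,0,0)"] lu[of "(0,1,0)"] lu[of "(0,0,1)"] by (auto simp: basis_E inner_prod_def)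
  have "emeasure (distr lborel borel W) (box l u) = emeasure lborel (W -` box l u)"
    by (simp add: emeasure_distr)
  also have "\<dots> = ennreal ((fst u - fst l) * (fst (snd u) - fst (snd l)) * (snd (snd u) - snd (snd l)))"
    unfolding W_box using le by (subst lborel3_box) (auto simp: W'_def vector_3)
  also have "\<dots> = (\<Prod>b\<in>Basis. (u - l) \<bullet> b)"
    by (simp add: prod_basis_E inner_prod_def)
  finally show "emeasure (distr lborel borel W) (box l u) = (\<Prod>b\<in>Basis. (u - l) \<bullet> b)" .
qed simp


lemma ubv2: "unit_ball_vol 2 = pi"
  using unit_ball_vol_even[of 1] by simp

lemma disk_measure: "r \<ge> 0 \<Longrightarrow> emeasure lborel (cball (0::real\<times>real) r) = ennreal (pi * r^2)"
  using emeasure_cball[of r "0::real\<times>real"] by (simp add: ubv2 power2_eq_square)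

lemma slice_cond:
  fixes c z rho :: real
  assumes c: "0 < c" "c < 1"
  shows "(z^2 + rho^2 \<le> 1 \<and> c \<le> z / sqrt (z^2 + rho^2)) \<longleftrightarrow>
         (0 < z \<and> z \<le> 1 \<and> rho^2 \<le> min (1 - z^2) (z^2 * (1 - c^2) / c^2))"
proof
  assume h: "z^2 + rho^2 \<le> 1 \<and> c \<le> z / sqrt (z^2 + rho^2)"
  define s where "s = sqrt (z^2 + rho^2)"
  have s0: "s \<ge> 0" by (simp add: s_def)
  have ss: "s^2 = z^2 + rho^2" by (simp add: s_def)
  have sp: "s > 0"
  proof (rule ccontr)
    assume "\<not> s > 0" then have "s = 0" using s0 by simp
    then show False using h c by (simp add: s_def)
  qed
  have "c * s \<le> z" using h sp by (simp add: s_def[symmetric] pos_le_divide_eq)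
  moreover have "0 < c * s" using c sp by simp
  ultimately have zp: "0 < z" by linarith
  have cs: "(c * s)^2 \<le> z^2" using \<open>c * s \<le> z\<close> c sp by (intro power_mono) auto
  then have "c^2 * (z^2 + rho^2) \<le> z^2" by (simp add: power_mult_distrib ss)
  then have "c^2 * rho^2 \<le> z^2 * (1 - c^2)" by (simp add: algebra_simps)
  then have r2: "rho^2 \<le> z^2 * (1 - c^2) / c^2" using c by (simp add: pos_le_divide_eq mult.commute)
  have r1: "rho^2 \<le> 1 - z^2" using h by simp
  have "z^2 \<le> 1" using h zero_le_power2[of rho] by linarith
  then have "z \<le> 1" using power2_le_imp_le[of z 1] by simp
  show "0 < z \<and> z \<le> 1 \<and> rho^2 \<le> min (1 - z^2) (z^2 * (1 - c^2) / c^2)"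
    using zp \<open>z \<le> 1\<close> r1 r2 by simp
next
  assume h: "0 < z \<and> z \<le> 1 \<and> rho^2 \<le> min (1 - z^2) (z^2 * (1 - c^2) / c^2)"
  define s where "s = sqrt (z^2 + rho^2)"
  have sp: "s > 0" using h by (simp add: s_def add_pos_nonneg)
  have ss: "s^2 = z^2 + rho^2" by (simp add: s_def)
  have "c^2 * rho^2 \<le> z^2 * (1 - c^2)" using h c by (simp add: pos_le_divide_eq mult.commute)
  then have "(c * s)^2 \<le> z^2" by (simp add: power_mult_distrib ss algebra_simps)
  then have "c * s \<le> z" using h power2_le_imp_le[of "c * s" z] by simp
  then have "c \<le> z / s" using sp by (simp add: pos_le_divide_eq)
  then show "z^2 + rho^2 \<le> 1 \<and> c \<le> z / sqrt (z^2 + rho^2)" using h by (simp add: s_def)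
qed

definition cone :: "real \<Rightarrow> E set" where
  "cone c = {e. e \<in> cball 0 1 \<and> c \<le> fst e / norm e}"

lemma fstnorm_meas[measurable]: "(\<lambda>e::E. fst e / norm e) \<in> borel_measurable borel"
  by (intro borel_measurable_divide borel_measurable_continuous_onI continuous_intros)

lemma cone_sets[measurable]: "cone c \<in> sets borel"
proof -
  have "cone c = cball 0 1 \<inter> (\<lambda>e::E. fst e / norm e) -` {c..}" by (auto simp: cone_def)
  also have "\<dots> \<in> sets borel" using measurable_sets[OF fstnorm_meas, of "{c..}"] by (intro sets.Int) auto
  finally show ?thesis .
qed

lemma slice_eq:
  assumes c: "0 < c" "c < 1"
  shows "Pair z -` cone c = (if 0 < z \<and> z \<le> 1 then cball 0 (sqrt (min (1 - z^2) (z^2 * (1 - c^2) / c^2))) else {})"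
proof -
  have "(z, w) \<in> cone c \<longleftrightarrow> (0 < z \<and> z \<le> 1 \<and> (norm w)^2 \<le> min (1 - z^2) (z^2 * (1 - c^2) / c^2))" for w :: "real \<times> real"
  proof -
    have "(z, w) \<in> cone c \<longleftrightarrow> (z^2 + (norm w)^2 \<le> 1 \<and> c \<le> z / sqrt (z^2 + (norm w)^2))"
      by (simp add: cone_def norm_Pair dist_norm)
    also have "\<dots> \<longleftrightarrow> (0 < z \<and> z \<le> 1 \<and> (norm w)^2 \<le> min (1 - z^2) (z^2 * (1 - c^2) / c^2))" by (rule slice_cond[OF c])
    finally show ?thesis .
  qed
  moreover have "(norm w)^2 \<le> m \<longleftrightarrow> norm w \<le> sqrt m" for w :: "real \<times> real" and m
  proof
    assume "(norm w)^2 \<le> m" then show "norm w \<le> sqrt m" by (rule real_le_rsqrt)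
  next
    assume a: "norm w \<le> sqrt m"
    then have "0 \<le> sqrt m" by (meson norm_ge_zero order_trans)
    then have m: "0 \<le> m" by simp
    have "(norm w)^2 \<le> (sqrt m)^2" using a by (intro power_mono) auto
    then show "(norm w)^2 \<le> m" using m by simp
  qed
  ultimately have "w \<in> Pair z -` cone c \<longleftrightarrow> (0 < z \<and> z \<le> 1 \<and> norm w \<le> sqrt (min (1 - z^2) (z^2 * (1 - c^2) / c^2)))" for w
    by (simp only: vimage_eq)
  then show ?thesis
  proof (intro set_eqI)
    fix w assume h: "\<And>w. (w \<in> Pair z -` cone c) = (0 < z \<and> z \<le> 1 \<and> norm w \<le> sqrt (min (1 - z\<^sup>2) (z\<^sup>2 * (1 - c\<^sup>2) / c\<^sup>2)))"
    show "w \<in> Pair z -` cone c \<longleftrightarrow> w \<in> (if 0 < z \<and> z \<le> 1 then cball 0 (sqrt (min (1 - z^2) (z^2 * (1 - c^2) / c^2))) else {})"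
      unfolding h[of w] by (simp only: mem_cball_0 split: if_splits) blast
  qed
qed


lemma poly_int1:
  assumes c: "0 < c" "c < 1"
  shows "((\<lambda>z. pi * (if z \<le> c then z^2 * (1 - c^2) / c^2 else 1 - z^2)) has_integral
          (pi * (1 - c^2) * c / 3)) {0..c}"
proof -
  define k where "k = pi * (1 - c^2) / c^2"
  have I: "((\<lambda>z. k * z^2) has_integral (k * c^3/3 - k * 0^3/3)) {0..c}"
    by (rule fundamental_theorem_of_calculus[of 0 c "\<lambda>z. k * z^3/3"])
       (use c in \<open>auto intro!: derivative_eq_intros simp: has_real_derivative_iff_has_vector_derivative[symmetric]\<close>)
  have e: "k * c^3/3 - k * 0^3/3 = pi * (1 - c^2) * c / 3"
  proof -
    have "k * c^3 = pi * (1 - c^2) * c" unfolding k_def using c by (simp add: power2_eq_square power3_eq_cube)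
    then show ?thesis by simp
  qed
  show ?thesis
    by (rule has_integral_eq[OF _ I[unfolded e]]) (auto simp: k_def)
qed

lemma poly_int2:
  assumes c: "0 < c" "c < 1"
  shows "((\<lambda>z. pi * (if z \<le> c then z^2 * (1 - c^2) / c^2 else 1 - z^2)) has_integral
          (pi * (2/3 - c + c^3/3))) {c..1}"
proof -
  have I: "((\<lambda>z. pi * (1 - z^2)) has_integral (pi * (1 - 1^3/3) - pi * (c - c^3/3))) {c..1}"
    by (rule fundamental_theorem_of_calculus[of c 1 "\<lambda>z. pi * (z - z^3/3)"])
       (use c in \<open>auto intro!: derivative_eq_intros simp: has_real_derivative_iff_has_vector_derivative[symmetric]\<close>)
  have e: "pi * (1 - 1^3/3) - pi * (c - c^3/3) = pi * (2/3 - c + c^3/3)" by (simp add: algebra_simps)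
  have p: "pi * (1 - z^2) = pi * (if z \<le> c then z^2 * (1 - c^2) / c^2 else 1 - z^2)" if "z \<in> {c..1}" for z
  proof (cases "z \<le> c")
    case True then have "z = c" using that by auto
    then show ?thesis using c by simp
  qed simp
  show ?thesis
    by (rule has_integral_eq[OF p I[unfolded e]])
qed


lemma poly_int:
  assumes c: "0 < c" "c < 1"
  shows "((\<lambda>z. pi * (if z \<le> c then z^2 * (1 - c^2) / c^2 else 1 - z^2)) has_integral
          (2 * pi / 3 * (1 - c))) {0..1}"
proof -
  have I: "((\<lambda>z. pi * (if z \<le> c then z^2 * (1 - c^2) / c^2 else 1 - z^2)) has_integral
          (pi * (1 - c^2) * c / 3 + pi * (2/3 - c + c^3/3))) {0..1}"
    using c by (intro has_integral_combine[OF _ _ poly_int1 poly_int2]) auto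
  have e: "pi * (1 - c^2) * c / 3 + pi * (2/3 - c + c^3/3) = 2 * pi / 3 * (1 - c)"
    by (simp add: field_simps power2_eq_square power3_eq_cube)
  show ?thesis using I[unfolded e] .
qed

lemma min_eq:
  fixes c z :: real
  assumes c: "0 < c" "c < 1" and z: "0 < z"
  shows "min (1 - z^2) (z^2 * (1 - c^2) / c^2) = (if z \<le> c then z^2 * (1 - c^2) / c^2 else 1 - z^2)"
proof -
  have c2: "0 < c^2" using c by simp
  have "z^2 * (1 - c^2) / c^2 \<le> 1 - z^2 \<longleftrightarrow> z^2 * (1 - c^2) \<le> (1 - z^2) * c^2"
    using c2 by (rule pos_divide_le_eq)
  also have "\<dots> \<longleftrightarrow> z^2 \<le> c^2" by (simp add: algebra_simps)
  also have "\<dots> \<longleftrightarrow> z \<le> c" using c z by (simp add: power2_le_iff_abs_le)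
  finally show ?thesis by auto
qed

lemma cone_measure:
  assumes c: "0 < c" "c < 1"
  shows "emeasure lborel (cone c) = ennreal (2 * pi / 3 * (1 - c))"
proof -
  define f where "f z = pi * (if z \<le> c then z^2 * (1 - c^2) / c^2 else 1 - z^2)" for z
  have sl: "emeasure lborel (Pair z -` cone c) = ennreal (f z) * indicator {0..1} z" for z
  proof (cases "0 < z \<and> z \<le> 1")
    case True
    have m0: "0 \<le> min (1 - z^2) (z^2 * (1 - c^2) / c^2)"
    proof -
      have "z^2 \<le> 1" using True power_mono[of z 1 2] by simp
      moreover have "c^2 \<le> 1" using c power_mono[of c 1 2] by simp
      ultimately show ?thesis using c by (simp add: zero_le_divide_iff)
    qed
    show ?thesis
      using True m0 c by (simp add: slice_eq disk_measure f_def min_eq)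
  next
    case False
    show ?thesis
    proof (cases "z = 0")
      case True then show ?thesis using c by (simp add: slice_eq f_def)
    qed (use False in \<open>auto simp: slice_eq[OF c]\<close>)
  qed
  have "emeasure lborel (cone c) = emeasure (lborel \<Otimes>\<^sub>M lborel) (cone c)"
    by (simp add: lborel_prod)
  also have "\<dots> = (\<integral>\<^sup>+z. emeasure lborel (Pair z -` cone c) \<partial>lborel)"
    by (rule lborel.emeasure_pair_measure_alt) (use cone_sets[of c] in \<open>simp only: lborel_prod sets_lborel\<close>)
  also have "\<dots> = (\<integral>\<^sup>+z. ennreal (f z) * indicator {0..1} z \<partial>lborel)"
    by (simp add: sl)
  also have "\<dots> = ennreal (2 * pi / 3 * (1 - c))"
  proof (rule nn_integral_has_integral_lebesgue')
    show "0 \<le> f x" if "x \<in> {0..1}" for x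
    proof -
      have "x^2 \<le> 1" using that power_mono[of x 1 2] by simp
      moreover have "c^2 \<le> 1" using c power_mono[of c 1 2] by simp
      ultimately show ?thesis using c by (auto simp: f_def)
    qed
    show "(f has_integral 2 * pi / 3 * (1 - c)) {0..1}"
      unfolding f_def by (rule poly_int[OF c])
  qed
  finally show ?thesis .
qed


definition CB :: "(real^3) set" where "CB = cball 0 1"
definition N :: "(real^3) measure" where "N = uniform_measure lborel CB"
definition bv :: "real^3 \<Rightarrow> real^3" where "bv l = l /\<^sub>R norm l"

lemma CB_sets[measurable]: "CB \<in> sets borel" by (simp add: CB_def)

lemma ubv3: "unit_ball_vol 3 = 4 * pi / 3"
  using unit_ball_vol_odd'[of 1] by (simp add: pochhammer_Suc_prod numeral_3_eq_3)

lemma CB_emeas: "emeasure lborel CB = ennreal (4 * pi / 3)"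
  using emeasure_cball[of 1 "0::real^3"] by (simp add: CB_def ubv3)

lemma CB_meas: "measure lborel CB = 4 * pi / 3"
  by (simp add: measure_def CB_emeas)

lemma CB_pos: "emeasure lborel CB \<noteq> 0" and CB_fin: "emeasure lborel CB \<noteq> \<infinity>"
  by (simp_all add: CB_emeas)

lemma N_prob: "prob_space N"
  unfolding N_def using CB_pos CB_fin by (rule prob_space_uniform_measure)

lemma sets_N[simp, measurable_cong]: "sets N = sets borel" and space_N[simp]: "space N = UNIV"
  by (simp_all add: N_def)

lemma measure_N: "X \<in> sets borel \<Longrightarrow> measure N X = measure lborel (CB \<inter> X) / measure lborel CB"
  unfolding N_def using CB_pos CB_fin by simp

lemma bv_meas[measurable]: "bv \<in> borel_measurable borel"
  unfolding bv_def by measurable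

lemma norm_bv: "norm (bv l) \<le> 1"
  by (cases "l = 0") (simp_all add: bv_def)

lemma lin_meas: "linear (Q::real^3\<Rightarrow>real^3) \<Longrightarrow> Q \<in> borel_measurable borel"
  by (intro borel_measurable_continuous_onI linear_continuous_on linear_conv_bounded_linear[THEN iffD1])

lemma N_invariant:
  fixes Q :: "real^3 \<Rightarrow> real^3"
  assumes lin: "linear Q" and nQ: "\<And>x. norm (Q x) = norm x" and inv: "\<And>x. Q (Q x) = x"
  shows "distr N borel Q = N"
proof (rule measure_eqI)
  show "sets (distr N borel Q) = sets N" by simp
  fix X assume "X \<in> sets (distr N borel Q)"
  then have X: "X \<in> sets borel" by simp
  have orth: "orthogonal_transformation Q" using lin nQ by (simp add: orthogonal_transformation)
  have Qm: "Q \<in> measurable N borel" using lin_meas[OF lin] by simp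
  have e: "CB \<inter> Q -` X = Q ` (CB \<inter> X)"
  proof
    show "CB \<inter> Q -` X \<subseteq> Q ` (CB \<inter> X)"
    proof
      fix y assume "y \<in> CB \<inter> Q -` X"
      then show "y \<in> Q ` (CB \<inter> X)" using inv nQ by (intro image_eqI[of _ _ "Q y"]) (auto simp: CB_def)
    qed
    show "Q ` (CB \<inter> X) \<subseteq> CB \<inter> Q -` X" using inv nQ by (auto simp: CB_def)
  qed
  have pre: "Q -` X \<in> sets borel" using lin_meas[OF lin] X by (simp add: measurable_sets_borel)
  have Y: "CB \<inter> X \<in> sets borel" using X by simp
  have "emeasure lborel (CB \<inter> X) \<le> emeasure lborel CB" using Y by (intro emeasure_mono) auto
  then have "emeasure lborel (CB \<inter> X) < \<infinity>" using CB_fin by (simp add: less_top top.extremum_uniqueI)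
  then have Yl: "CB \<inter> X \<in> lmeasurable" using Y by (intro fmeasurableI) (simp_all add: emeasure_completion)
  have QY: "Q ` (CB \<inter> X) \<in> sets borel" unfolding e[symmetric] using pre by simp
  have "measure lebesgue (Q ` (CB \<inter> X)) = measure lebesgue (CB \<inter> X)"
    by (rule measure_orthogonal_image[OF orth Yl])
  then have mm: "measure lborel (CB \<inter> Q -` X) = measure lborel (CB \<inter> X)"
    unfolding e using Y QY by simp
  have "measure (distr N borel Q) X = measure N (Q -` X)"
    using Qm X by (simp add: measure_distr)
  also have "\<dots> = measure lborel (CB \<inter> Q -` X) / measure lborel CB" using pre by (rule measure_N)
  also have "\<dots> = measure N X" using X by (simp add: measure_N mm)
  finally have m: "measure (distr N borel Q) X = measure N X" .
  interpret P: prob_space N by (rule N_prob)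
  interpret P2: prob_space "distr N borel Q" using Qm by (rule P.prob_space_distr)
  show "emeasure (distr N borel Q) X = emeasure N X"
    using m X by (simp add: P.emeasure_eq_measure P2.emeasure_eq_measure)
qed

lemma N_invariant_integral:
  fixes Q :: "real^3 \<Rightarrow> real^3" and f :: "real^3 \<Rightarrow> real"
  assumes lin: "linear Q" and nQ: "\<And>x. norm (Q x) = norm x" and inv: "\<And>x. Q (Q x) = x"
    and f: "f \<in> borel_measurable borel"
  shows "integral\<^sup>L N f = integral\<^sup>L N (\<lambda>x. f (Q x))"
proof -
  have "integral\<^sup>L N f = integral\<^sup>L (distr N borel Q) f" using N_invariant[OF assms(1-3)] by simp
  also have "\<dots> = integral\<^sup>L N (\<lambda>x. f (Q x))"
    using lin_meas[OF lin] f by (intro integral_distr) auto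
  finally show ?thesis .
qed

lemma N_invariant_measure:
  fixes Q :: "real^3 \<Rightarrow> real^3"
  assumes lin: "linear Q" and nQ: "\<And>x. norm (Q x) = norm x" and inv: "\<And>x. Q (Q x) = x"
    and X: "X \<in> sets borel"
  shows "measure N X = measure N (Q -` X)"
proof -
  have "measure N X = measure (distr N borel Q) X" using N_invariant[OF assms(1-3)] by simp
  also have "\<dots> = measure N (Q -` X)"
    using lin_meas[OF lin] X by (subst measure_distr) auto
  finally show ?thesis .
qed

lemma bv_lin: "linear Q \<Longrightarrow> (\<And>x. norm (Q x) = norm x) \<Longrightarrow> bv (Q l) = Q (bv l)"
  by (simp add: bv_def linear_scale)


interpretation NP: prob_space N by (rule N_prob)

lemma norm_W: "norm (W l) = norm l"
  by (simp add: W_def norm_Pair norm_vec_def L2_set_def sum_3 add.assoc)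

lemma bv1: "bv l $ 1 = l $ 1 / norm l"
  by (simp add: bv_def divide_inverse mult.commute)

lemma W_cone: "W -` cone c = CB \<inter> {l. c \<le> bv l $ 1}"
  by (auto simp: cone_def CB_def W_def[symmetric] norm_W bv1 mem_cball_0) (simp_all add: W_def)

lemma measure_W_cone: "measure lborel (W -` cone c) = measure lborel (cone c)"
proof -
  have "measure lborel (cone c) = measure (distr lborel borel W) (cone c)" by (simp add: lborel_transfer)
  also have "\<dots> = measure lborel (W -` cone c)" by (subst measure_distr) auto
  finally show ?thesis by simp
qed

lemma G_val:
  assumes c: "0 < c" "c < 1"
  shows "measure N {l. c \<le> bv l $ 1} = (1 - c) / 2"
proof -
  have "measure N {l. c \<le> bv l $ 1} = measure lborel (CB \<inter> {l. c \<le> bv l $ 1}) / measure lborel CB"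
    by (rule measure_N) measurable
  also have "CB \<inter> {l. c \<le> bv l $ 1} = W -` cone c" by (simp add: W_cone)
  also have "measure lborel (W -` cone c) = 2 * pi / 3 * (1 - c)"
  proof -
    have "measure lborel (cone c) = 2 * pi / 3 * (1 - c)"
      using cone_measure[OF c] c unfolding measure_def by simp
    then show ?thesis by (simp add: measure_W_cone)
  qed
  finally show ?thesis by (simp add: CB_meas)
qed

definition R :: "real^3 \<Rightarrow> real^3" where "R l = (\<chi> i. if i = 1 then - l$i else l$i)"

lemma R_lin: "linear R"
  by (rule linearI) (simp_all add: R_def vec_eq_iff)

lemma R_norm: "norm (R x) = norm x"
  by (simp add: R_def norm_vec_def L2_set_def sum_3)

lemma R_inv: "R (R x) = x"
  by (simp add: R_def vec_eq_iff)

lemma bv_R: "bv (R l) $ 1 = - (bv l $ 1)"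
  using bv_lin[OF R_lin R_norm] by (simp add: R_def)

lemma F_refl: "measure N {l. bv l $ 1 \<le> - c} = measure N {l. c \<le> bv l $ 1}"
proof -
  have "measure N {l. bv l $ 1 \<le> - c} = measure N (R -` {l. bv l $ 1 \<le> - c})"
    by (rule N_invariant_measure[OF R_lin R_norm R_inv]) measurable
  also have "R -` {l. bv l $ 1 \<le> - c} = {l. c \<le> bv l $ 1}" by (auto simp: bv_R)
  finally show ?thesis .
qed

lemma bv1_bound: "\<bar>bv l $ 1\<bar> \<le> 1"
  using component_le_norm_cart[of "bv l" 1] norm_bv[of l] by simp

definition F :: "real \<Rightarrow> real" where "F c = measure N {l. bv l $ 1 \<le> c}"

lemma F_mono: "c \<le> d \<Longrightarrow> F c \<le> F d"
  unfolding F_def by (intro NP.finite_measure_mono) auto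

lemma F_neg: assumes "-1 < c" "c < 0" shows "F c = (1 + c) / 2"
  using F_refl[of "-c"] G_val[of "-c"] assms by (simp add: F_def)

lemma F_pos: assumes c: "0 < c" "c < 1" shows "F c = (1 + c) / 2"
proof -
  define H where "H = measure N {l. c < bv l $ 1}"
  have FH: "F c = 1 - H"
  proof -
    have "{l. bv l $ 1 \<le> c} = space N - {l. c < bv l $ 1}" by auto
    moreover have "measure N (space N - {l. c < bv l $ 1}) = 1 - measure N {l. c < bv l $ 1}"
      by (rule NP.prob_compl) measurable
    ultimately show ?thesis unfolding F_def H_def by simp
  qed
  have "H \<le> (1 - c) / 2"
    unfolding H_def G_val[OF c, symmetric] by (intro NP.finite_measure_mono) auto
  moreover have "(1 - c) / 2 \<le> H"
  proof (rule field_le_epsilon)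
    fix e :: real assume e: "0 < e"
    define d where "d = c + min e ((1 - c) / 2)"
    have d: "c < d" "d < 1" "d \<le> c + e" using c e by (auto simp: d_def min_def field_simps)
    have "(1 - d) / 2 = measure N {l. d \<le> bv l $ 1}" using G_val[of d] d c by simp
    also have "\<dots> \<le> H" unfolding H_def using d by (intro NP.finite_measure_mono) auto
    finally show "(1 - c) / 2 \<le> H + e" using d e by simp
  qed
  ultimately show ?thesis using FH by simp
qed

lemma F_val: "F c = (if c < -1 then 0 else if c \<le> 1 then (1 + c) / 2 else 1)"
proof -
  have low: "F c = 0" if "c < -1"
  proof -
    have "{l. bv l $ 1 \<le> c} = {}" using that bv1_bound by (auto simp: abs_le_iff) (smt (verit))
    then show ?thesis by (simp add: F_def)
  qed
  have high: "F c = 1" if "1 \<le> c"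
  proof -
    have "{l. bv l $ 1 \<le> c} = space N" using that bv1_bound by (auto simp: abs_le_iff) (smt (verit))
    then show ?thesis using NP.prob_space by (simp add: F_def)
  qed
  have le0: "F 0 \<le> 1/2"
  proof (rule field_le_epsilon)
    fix e :: real assume e: "0 < e"
    define d where "d = min e (1/2)"
    have d: "0 < d" "d \<le> e" "d < 1" using e by (auto simp: d_def min_def)
    have "F 0 \<le> F d" using d by (intro F_mono) auto
    then show "F 0 \<le> 1/2 + e" using F_pos[of d] d by simp
  qed
  have leM1: "F (-1) \<le> 0"
  proof (rule field_le_epsilon)
    fix e :: real assume e: "0 < e"
    define d where "d = -1 + min e (1/2)"
    have d: "-1 < d" "d \<le> -1 + e" "d < 0" using e by (auto simp: d_def min_def)
    have "F (-1) \<le> F d" using d by (intro F_mono) auto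
    then show "F (-1) \<le> 0 + e" using F_neg[of d] d by simp
  qed
  have ge0: "1/2 \<le> F 0"
  proof (rule field_le_epsilon)
    fix e :: real assume e: "0 < e"
    define d where "d = - min e (1/2)"
    have d: "-1 < d" "-e \<le> d" "d < 0" using e by (auto simp: d_def min_def)
    have "F d \<le> F 0" using d by (intro F_mono) auto
    then show "1/2 \<le> F 0 + e" using F_neg[of d] d by simp
  qed
  have F0: "0 \<le> F c" for c unfolding F_def by simp
  show ?thesis
  proof (cases "c < -1")
    case True then show ?thesis using low by simp
  next
    case c1: False
    show ?thesis
    proof (cases "c \<le> 1")
      case c2: True
      consider "c = -1" | "-1 < c \<and> c < 0" | "c = 0" | "0 < c \<and> c < 1" | "c = 1" using c1 c2 by linarith
      then show ?thesis
      proof cases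
        case 1 then show ?thesis using leM1 F0[of "-1"] by simp
      next
        case 2 then show ?thesis using F_neg by simp
      next
        case 3 then show ?thesis using le0 ge0 by simp
      next
        case 4 then show ?thesis using F_pos by simp
      next
        case 5 then show ?thesis using high by simp
      qed
    next
      case False then show ?thesis using high c1 by simp
    qed
  qed
qed


lemma vnth_meas[measurable]: "(\<lambda>l::real^3. l $ i) \<in> borel_measurable borel"
  by (intro borel_measurable_continuous_onI continuous_intros)

lemma bvc_meas[measurable]: "(\<lambda>l. bv l $ i) \<in> borel_measurable borel"
  using measurable_compose[OF bv_meas vnth_meas] by (simp add: o_def)

definition U :: "real measure" where "U = uniform_measure lborel {-1..1}"

lemma U_emeas: "emeasure lborel {-1..1::real} = ennreal 2" by simp

lemma U_prob: "prob_space U"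
  unfolding U_def by (rule prob_space_uniform_measure) simp_all

lemma sets_U[simp, measurable_cong]: "sets U = sets borel" and space_U[simp]: "space U = UNIV"
  by (simp_all add: U_def)

lemma U_rd: "real_distribution U"
  unfolding real_distribution_def real_distribution_axioms_def using U_prob by simp

definition D :: "real measure" where "D = distr N borel (\<lambda>l. bv l $ 1)"

lemma D_rd: "real_distribution D"
  unfolding real_distribution_def real_distribution_axioms_def D_def
  by (auto intro!: NP.prob_space_distr)

lemma cdf_D: "cdf D c = F c"
  unfolding cdf_def D_def F_def by (subst measure_distr) (auto simp: vimage_def)

lemma measure_U: "A \<in> sets borel \<Longrightarrow> measure U A = measure lborel ({-1..1} \<inter> A) / 2"
  unfolding U_def by (subst measure_uniform_measure) simp_all

lemma cdf_U: "cdf U c = F c"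
proof -
  have "cdf U c = measure lborel ({-1..1} \<inter> {..c}) / 2" unfolding cdf_def by (simp add: measure_U)
  also have "\<dots> = (if c < -1 then 0 else if c \<le> 1 then (1 + c) / 2 else 1)"
  proof (cases "c < -1")
    case True then have "{-1..1} \<inter> {..c} = {}" by auto
    then show ?thesis using True by simp
  next
    case False
    then have "{-1..1} \<inter> {..c} = {-1..min 1 c}" by auto
    then show ?thesis using False by (auto simp: min_def)
  qed
  finally show ?thesis by (simp add: F_val)
qed

lemma D_eq_U: "D = U"
  by (rule cdf_unique[OF D_rd U_rd]) (simp add: fun_eq_iff cdf_D cdf_U)

lemma int_bv1:
  fixes g :: "real \<Rightarrow> real"
  assumes g: "g \<in> borel_measurable borel"
  shows "integral\<^sup>L N (\<lambda>l. g (bv l $ 1)) = integral\<^sup>L U g"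
proof -
  have "integral\<^sup>L U g = integral\<^sup>L D g" by (simp add: D_eq_U)
  also have "\<dots> = integral\<^sup>L N (\<lambda>l. g (bv l $ 1))" unfolding D_def using g by (subst integral_distr) auto
  finally show ?thesis by simp
qed

lemma UI1: assumes "-1 \<le> c" "c \<le> 1" shows "integral\<^sup>L U (indicator {c..} :: real \<Rightarrow> real) = (1 - c) / 2"
proof -
  interpret UP: prob_space U by (rule U_prob)
  have "integral\<^sup>L U (indicator {c..} :: real \<Rightarrow> real) = measure U {c..}" by simp
  also have "\<dots> = measure lborel ({-1..1} \<inter> {c..}) / 2" by (simp add: measure_U)
  also have "{-1..1} \<inter> {c..} = {c..1::real}" using assms by auto
  finally show ?thesis using assms by simp
qed

lemma U_density: "U = density lborel (\<lambda>x. ennreal (indicator {-1..1} x / 2))"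
  unfolding U_def uniform_measure_def U_emeas
  by (intro arg_cong2[where f=density] refl ext) (auto simp: divide_ennreal[symmetric] split: split_indicator)

lemma UI2: assumes "-1 \<le> c" "c \<le> 1"
  shows "integral\<^sup>L U (\<lambda>s. indicator {c..} s * s) = (1 - c^2) / 4"
proof -
  have "integral\<^sup>L U (\<lambda>s. indicator {c..} s * s) = integral\<^sup>L lborel (\<lambda>s. (indicator {-1..1} s / 2) *\<^sub>R (indicator {c..} s * s))"
    unfolding U_density by (rule integral_density) auto
  also have "\<dots> = integral\<^sup>L lborel (\<lambda>s. indicator {c..1} s *\<^sub>R (s / 2))"
    using assms by (intro Bochner_Integration.integral_cong[OF refl]) (auto split: split_indicator)
  also have "\<dots> = 1^2/4 - c^2/4"
    by (rule integral_FTC_atLeastAtMost[OF assms(2)])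
       (auto intro!: derivative_eq_intros continuous_intros simp: has_real_derivative_iff_has_vector_derivative[symmetric])
  finally show ?thesis by (simp add: diff_divide_distrib)
qed


definition e1 :: "real^3" where "e1 = axis 1 1"

lemma householder:
  fixes u :: "real^3"
  assumes u: "norm u = 1"
  shows "\<exists>Q. linear Q \<and> (\<forall>x. norm (Q x) = norm x) \<and> (\<forall>x. Q (Q x) = x) \<and> Q e1 = u \<and> (\<forall>x y. Q x \<bullet> y = x \<bullet> Q y)"
proof (cases "u = e1")
  case True
  then show ?thesis by (intro exI[of _ "\<lambda>x. x"]) (simp add: linear_id[unfolded id_def])
next
  case False
  define w where "w = u - e1"
  have w0: "w \<noteq> 0" using False by (simp add: w_def)
  have ww: "w \<bullet> w > 0" using w0 by simp
  define Q where "Q x = x - (2 * (x \<bullet> w) / (w \<bullet> w)) *\<^sub>R w" for x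
  have lin: "linear Q"
    unfolding Q_def by (rule linearI) (simp_all add: inner_add_left algebra_simps add_divide_distrib scaleR_add_left)
  have Qw: "Q x \<bullet> w = - (x \<bullet> w)" for x
    using ww by (simp add: Q_def inner_diff_left)
  have inv: "Q (Q x) = x" for x
    unfolding Q_def[of "Q x"] Qw by (simp add: Q_def)
  have sym: "Q x \<bullet> y = x \<bullet> Q y" for x y
    by (simp add: Q_def inner_diff_left inner_diff_right algebra_simps inner_commute)
  have nn: "norm (Q x) = norm x" for x
  proof -
    have "Q x \<bullet> Q x = x \<bullet> x"
      using sym[of x "Q x"] inv[of x] by simp
    then show ?thesis by (simp add: norm_eq_sqrt_inner)
  qed
  have e1n: "e1 \<bullet> e1 = 1" by (simp add: e1_def)
  have uu: "u \<bullet> u = 1" using u by (simp add: dot_square_norm)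
  have "w \<bullet> w = 2 - 2 * (u \<bullet> e1)" by (simp add: w_def inner_diff_left inner_diff_right e1n uu inner_commute)
  moreover have "e1 \<bullet> w = (u \<bullet> e1) - 1" by (simp add: w_def inner_diff_right e1n inner_commute)
  ultimately have "2 * (e1 \<bullet> w) / (w \<bullet> w) = -1" using ww by (simp add: field_simps)
  then have "Q e1 = u" by (simp add: Q_def w_def)
  then show ?thesis using lin nn inv sym by blast
qed

lemma inner_e1: "x \<bullet> e1 = x $ 1"
  by (simp add: e1_def inner_axis)

lemma int_dir:
  fixes g :: "real \<Rightarrow> real" and u :: "real^3"
  assumes u: "norm u = 1" and g: "g \<in> borel_measurable borel"
  shows "integral\<^sup>L N (\<lambda>l. g (bv l \<bullet> u)) = integral\<^sup>L U g"
proof -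
  obtain Q where Q: "linear Q" "\<And>x. norm (Q x) = norm x" "\<And>x. Q (Q x) = x" "Q e1 = u" "\<And>x y. Q x \<bullet> y = x \<bullet> Q y"
    using householder[OF u] by blast
  have m: "(\<lambda>l. g (bv l \<bullet> u)) \<in> borel_measurable borel" using g by measurable
  have "integral\<^sup>L N (\<lambda>l. g (bv l \<bullet> u)) = integral\<^sup>L N (\<lambda>l. g (bv (Q l) \<bullet> u))"
    by (rule N_invariant_integral[OF Q(1-3) m])
  also have "\<dots> = integral\<^sup>L N (\<lambda>l. g (bv l $ 1))"
  proof -
    have "bv (Q l) \<bullet> u = bv l $ 1" for l
    proof -
      have "bv (Q l) \<bullet> u = Q (bv l) \<bullet> u" using bv_lin[OF Q(1,2)] by simp
      also have "\<dots> = bv l \<bullet> Q u" by (rule Q(5))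
      also have "Q u = e1" using Q(3)[of e1] Q(4) by simp
      finally show ?thesis by (simp add: inner_e1)
    qed
    then show ?thesis by simp
  qed
  also have "\<dots> = integral\<^sup>L U g" by (rule int_bv1[OF g])
  finally show ?thesis .
qed

lemma bvu_bound: "norm u = 1 \<Longrightarrow> \<bar>bv l \<bullet> u\<bar> \<le> 1"
  using Cauchy_Schwarz_ineq2[of "bv l" u] norm_bv[of l] by simp

lemma bdd_int:
  fixes f :: "real^3 \<Rightarrow> real"
  assumes "f \<in> borel_measurable borel" "\<And>l. \<bar>f l\<bar> \<le> B"
  shows "integrable N f"
  by (rule NP.integrable_const_bound[of _ B]) (use assms in auto)

lemma C1:
  assumes u: "norm u = 1" and c: "-1 \<le> c" "c \<le> 1"
  shows "integral\<^sup>L N (\<lambda>l. indicator {c..} (bv l \<bullet> u) :: real) = (1 - c) / 2"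
  using int_dir[OF u, of "indicator {c..}"] UI1[OF c] by simp

lemma C2a:
  assumes u: "norm u = 1" and c: "-1 \<le> c" "c \<le> 1"
  shows "integral\<^sup>L N (\<lambda>l. indicator {c..} (bv l \<bullet> u) * (bv l \<bullet> u)) = (1 - c^2) / 4"
  using int_dir[OF u, of "\<lambda>s. indicator {c..} s * s"] UI2[OF c] by simp

lemma C2b:
  assumes u: "norm u = 1" and w: "u \<bullet> w = 0"
  shows "integral\<^sup>L N (\<lambda>l. indicator {c..} (bv l \<bullet> u) * (bv l \<bullet> w)) = 0"
proof -
  define S where "S x = (2 * (x \<bullet> u)) *\<^sub>R u - x" for x
  have uu: "u \<bullet> u = 1" using u by (simp add: dot_square_norm)
  have lin: "linear S" unfolding S_def by (rule linearI) (simp_all add: inner_add_left algebra_simps scaleR_add_left)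
  have Su: "S x \<bullet> u = x \<bullet> u" for x by (simp add: S_def inner_diff_left uu)
  have inv: "S (S x) = x" for x unfolding S_def[of "S x"] Su by (simp add: S_def)
  have sym: "S x \<bullet> y = x \<bullet> S y" for x y by (simp add: S_def inner_diff_left inner_diff_right algebra_simps inner_commute)
  have nn: "norm (S x) = norm x" for x
  proof -
    have "S x \<bullet> S x = x \<bullet> x" using sym[of x "S x"] inv[of x] by simp
    then show ?thesis by (simp add: norm_eq_sqrt_inner)
  qed
  have Sw: "S w = - w" by (simp add: S_def w inner_commute)
  have Suu: "S u = u" by (simp add: S_def uu scaleR_2)
  let ?f = "\<lambda>l. indicator {c..} (bv l \<bullet> u) * (bv l \<bullet> w) :: real"
  have m: "?f \<in> borel_measurable borel" by measurable
  have "integral\<^sup>L N ?f = integral\<^sup>L N (\<lambda>l. ?f (S l))"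
    by (rule N_invariant_integral[OF lin nn inv m])
  also have "\<dots> = integral\<^sup>L N (\<lambda>l. - ?f l)"
  proof -
    have "?f (S l) = - ?f l" for l
      using bv_lin[OF lin nn, of l] by (simp add: sym[of "bv l"] Suu Sw)
    then show ?thesis by simp
  qed
  also have "\<dots> = - integral\<^sup>L N ?f" by simp
  finally show ?thesis by simp
qed

lemma C2:
  assumes u: "norm u = 1" and c: "-1 \<le> c" "c \<le> 1"
  shows "integral\<^sup>L N (\<lambda>l. indicator {c..} (bv l \<bullet> u) * (bv l \<bullet> w)) = (1 - c^2) / 4 * (u \<bullet> w)"
proof -
  define w' where "w' = w - (u \<bullet> w) *\<^sub>R u"
  have uu: "u \<bullet> u = 1" using u by (simp add: dot_square_norm)
  have w': "u \<bullet> w' = 0" by (simp add: w'_def inner_diff_right uu)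
  have dec: "bv l \<bullet> w = (u \<bullet> w) * (bv l \<bullet> u) + bv l \<bullet> w'" for l
    by (simp add: w'_def inner_diff_right)
  have i1: "integrable N (\<lambda>l. indicator {c..} (bv l \<bullet> u) * (bv l \<bullet> u) :: real)"
    by (rule bdd_int[of _ 1]) (use bvu_bound[OF u] in \<open>auto simp: abs_mult split: split_indicator\<close>)
  have i2: "integrable N (\<lambda>l. indicator {c..} (bv l \<bullet> u) * (bv l \<bullet> w') :: real)"
    by (rule bdd_int[of _ "norm w'"]) (auto simp: abs_mult split: split_indicator intro!: order_trans[OF Cauchy_Schwarz_ineq2] mult_left_le_one_le norm_bv)
  have "integral\<^sup>L N (\<lambda>l. indicator {c..} (bv l \<bullet> u) * (bv l \<bullet> w)) =
        integral\<^sup>L N (\<lambda>l. (u \<bullet> w) * (indicator {c..} (bv l \<bullet> u) * (bv l \<bullet> u)) + indicator {c..} (bv l \<bullet> u) * (bv l \<bullet> w'))"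
    by (simp add: dec algebra_simps)
  also have "\<dots> = (u \<bullet> w) * integral\<^sup>L N (\<lambda>l. indicator {c..} (bv l \<bullet> u) * (bv l \<bullet> u)) + integral\<^sup>L N (\<lambda>l. indicator {c..} (bv l \<bullet> u) * (bv l \<bullet> w'))"
    using i1 i2 by simp
  also have "\<dots> = (1 - c^2) / 4 * (u \<bullet> w)" using C2a[OF u c] C2b[OF u w'] by simp
  finally show ?thesis .
qed


lemma norm_sq3: "(norm (x::real^3))^2 = (x$1)^2 + (x$2)^2 + (x$3)^2"
  by (simp add: norm_vec_def L2_set_def sum_3 add_nonneg_nonneg)

lemma trace_BF: "trace (BF al v) = complex_of_real (2 * al)"
  by (simp add: trace_def sum_2 BF_entries)

lemma scaleR_BF: "r *\<^sub>R BF al v = BF (r * al) (\<lambda>i. r * v i)"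
  by (simp add: BF_def scaleR_add_right scaleR_sum_right)

lemma int_BF:
  fixes f :: "real^3 \<Rightarrow> real" and g :: "real^3 \<Rightarrow> 3 \<Rightarrow> real"
  assumes f: "integrable N f" and g: "\<And>i. integrable N (\<lambda>l. g l i)"
  shows "integrable N (\<lambda>l. BF (f l) (g l))"
    and "integral\<^sup>L N (\<lambda>l. BF (f l) (g l)) = BF (integral\<^sup>L N f) (\<lambda>i. integral\<^sup>L N (\<lambda>l. g l i))"
proof -
  have i1: "integrable N (\<lambda>l. f l *\<^sub>R (mat 1 :: qop))" using f by simp
  have i2: "integrable N (\<lambda>l. \<Sum>i\<in>UNIV. g l i *\<^sub>R pauli i)"
    using Bochner_Integration.integrable_sum[where I=UNIV and M=N and f="\<lambda>i l. g l i *\<^sub>R pauli i"] g by simp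
  show "integrable N (\<lambda>l. BF (f l) (g l))" unfolding BF_def using i1 i2 by simp
  have "integral\<^sup>L N (\<lambda>l. BF (f l) (g l)) =
      integral\<^sup>L N (\<lambda>l. f l *\<^sub>R (mat 1 :: qop)) + integral\<^sup>L N (\<lambda>l. \<Sum>i\<in>UNIV. g l i *\<^sub>R pauli i)"
    unfolding BF_def using i1 i2 by (rule Bochner_Integration.integral_add)
  also have "integral\<^sup>L N (\<lambda>l. \<Sum>i\<in>UNIV. g l i *\<^sub>R pauli i) = (\<Sum>i\<in>UNIV. integral\<^sup>L N (\<lambda>l. g l i *\<^sub>R pauli i))"
    using Bochner_Integration.integral_sum[where I=UNIV and M=N and f="\<lambda>i l. g l i *\<^sub>R pauli i"] g by simp
  also have "\<dots> = (\<Sum>i\<in>UNIV. integral\<^sup>L N (\<lambda>l. g l i) *\<^sub>R pauli i)" using g by simp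
  finally show "integral\<^sup>L N (\<lambda>l. BF (f l) (g l)) = BF (integral\<^sup>L N f) (\<lambda>i. integral\<^sup>L N (\<lambda>l. g l i))"
    using f by (simp add: BF_def)
qed

definition sig :: "real^3 \<Rightarrow> qop" where "sig l = BF (1/2) (\<lambda>i. bv l $ i / 2)"

lemma sig_psd: "psd (sig l)"
  unfolding sig_def
proof (rule psd_BF)
  have "(norm (bv l))^2 \<le> 1" using norm_bv[of l] by (simp add: power_le_one)
  then show "(bv l $ 1 / 2)^2 + (bv l $ 2 / 2)^2 + (bv l $ 3 / 2)^2 \<le> (1/2)^2"
    unfolding norm_sq3 by (simp add: power_divide)
qed simp

lemma bvi_meas[measurable]: "(\<lambda>l. bv l \<bullet> u) \<in> borel_measurable borel"
  by measurable

lemma bvc_bound: "\<bar>bv l $ i\<bar> \<le> 1"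
  using component_le_norm_cart[of "bv l" i] norm_bv[of l] by simp

lemma int_bvc: "integrable N (\<lambda>l. bv l $ i)"
  by (rule bdd_int[of _ 1]) (simp_all add: bvc_bound)

lemma e1_norm: "norm e1 = 1" by (simp add: e1_def)

lemma I2: "integral\<^sup>L N (\<lambda>l. bv l $ i) = 0"
proof -
  have "integral\<^sup>L N (\<lambda>l. indicator {-1..} (bv l \<bullet> e1) * (bv l \<bullet> axis i 1)) = (1 - (-1)^2) / 4 * (e1 \<bullet> axis i 1)"
    by (rule C2[OF e1_norm]) auto
  moreover have "indicator {-1..} (bv l \<bullet> e1) * (bv l \<bullet> axis i 1) = bv l $ i" for l
    using bvu_bound[OF e1_norm, of l] by (simp add: inner_axis abs_le_iff)
  ultimately show ?thesis by simp
qed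

lemma I1:
  assumes u: "norm u = 1" and c: "-1 \<le> c" "c \<le> 1"
  shows "integral\<^sup>L N (\<lambda>l. indicator {c..} (bv l \<bullet> u) * bv l $ i) = (1 - c^2) / 4 * u $ i"
  using C2[OF u c, of "axis i 1"] by (simp add: inner_axis)


definition qq :: "real^3 \<Rightarrow> real^3 \<Rightarrow> real^3 \<Rightarrow> real" where
  "qq a T x = (let k = norm (\<chi> i. T$i * x$i); c0 = - (a \<bullet> x) in if 1 - c0^2 = 0 then 0 else 2 * k / (1 - c0^2))"

definition uu :: "real^3 \<Rightarrow> real^3 \<Rightarrow> real^3" where
  "uu T x = (let t = (\<chi> i. T$i * x$i) in if norm t = 0 then e1 else t /\<^sub>R norm t)"

definition pT :: "real^3 \<Rightarrow> real^3 \<Rightarrow> real^3 \<Rightarrow> real^3 \<Rightarrow> real" where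
  "pT a T x l = qq a T x * indicator {- (a \<bullet> x)..} (bv l \<bullet> uu T x) + (1 - qq a T x) * ((1 + a \<bullet> x) / 2)"

definition pp :: "real^3 \<Rightarrow> real^3 \<Rightarrow> real^3 \<Rightarrow> bool \<Rightarrow> real^3 \<Rightarrow> real" where
  "pp a T x b l = (if norm x = 1 then (if b then pT a T x l else 1 - pT a T x l) else 1/2)"

lemma uu_norm: "norm (uu T x) = 1"
  by (simp add: uu_def Let_def e1_norm)

lemma key_facts:
  assumes H: "(a \<bullet> x)^2 + 2 * norm (\<chi> i. T$i * x$i) \<le> 1"
  shows "0 \<le> qq a T x" "qq a T x \<le> 1" "-1 \<le> a \<bullet> x" "a \<bullet> x \<le> 1"
    and "\<And>i. qq a T x * (1 - (a \<bullet> x)^2) / 4 * uu T x $ i = T$i * x$i / 2"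
proof -
  define k where "k = norm (\<chi> i. T$i * x$i)"
  have k0: "0 \<le> k" by (simp add: k_def)
  have H': "2 * k \<le> 1 - (a \<bullet> x)^2" using H by (simp add: k_def)
  have q: "qq a T x = (if 1 - (a \<bullet> x)^2 = 0 then 0 else 2 * k / (1 - (a \<bullet> x)^2))"
    by (simp add: qq_def k_def Let_def)
  show "0 \<le> qq a T x" using H' k0 by (simp add: q)
  show "qq a T x \<le> 1" using H' k0 by (simp add: q divide_le_eq_1)
  have "(a \<bullet> x)^2 \<le> 1" using H' k0 by simp
  then have "\<bar>a \<bullet> x\<bar> \<le> 1" using power2_le_imp_le[of "\<bar>a \<bullet> x\<bar>" 1] by simp
  then show "-1 \<le> a \<bullet> x" "a \<bullet> x \<le> 1" by auto
  fix i
  show "qq a T x * (1 - (a \<bullet> x)^2) / 4 * uu T x $ i = T$i * x$i / 2"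
  proof (cases "k = 0")
    case True
    then have "(\<chi> i. T$i * x$i) = 0" by (simp add: k_def)
    then have "T$i * x$i = 0" by (metis vec_lambda_beta zero_index)
    then show ?thesis using True by (simp add: q)
  next
    case False
    then have kp: "0 < k" using k0 by simp
    then have d: "1 - (a \<bullet> x)^2 > 0" using H' by simp
    have tn: "(\<chi> i. T$i * x$i) \<noteq> 0" using False by (simp add: k_def)
    have "uu T x $ i = T$i * x$i / k" using tn by (simp add: uu_def Let_def k_def[symmetric] divide_inverse mult.commute)
    then show ?thesis using d kp by (simp add: q)
  qed
qed

lemma pT_bounds:
  assumes H: "(a \<bullet> x)^2 + 2 * norm (\<chi> i. T$i * x$i) \<le> 1"
  shows "0 \<le> pT a T x l" "pT a T x l \<le> 1"
proof -
  note kf = key_facts[OF H]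
  have m: "0 \<le> (1 + a \<bullet> x) / 2" "(1 + a \<bullet> x) / 2 \<le> 1" using kf(3,4) by auto
  have ind: "0 \<le> (indicator {- (a \<bullet> x)..} (bv l \<bullet> uu T x) :: real)" "(indicator {- (a \<bullet> x)..} (bv l \<bullet> uu T x) :: real) \<le> 1"
    by (simp_all split: split_indicator)
  let ?q = "qq a T x" and ?i = "indicator {- (a \<bullet> x)..} (bv l \<bullet> uu T x) :: real" and ?m = "(1 + a \<bullet> x) / 2"
  have "0 \<le> ?q * ?i + (1 - ?q) * ?m" using kf(1,2) ind m by (intro add_nonneg_nonneg mult_nonneg_nonneg) auto
  then show "0 \<le> pT a T x l" by (simp add: pT_def)
  have "?q * ?i + (1 - ?q) * ?m \<le> ?q * 1 + (1 - ?q) * 1"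
    using kf(1,2) ind m by (intro add_mono mult_left_mono) auto
  then show "pT a T x l \<le> 1" by (simp add: pT_def)
qed

lemma pT_meas[measurable]: "pT a T x \<in> borel_measurable borel"
  unfolding pT_def by measurable

lemma pT_int: "integrable N (pT a T x)" and pT_bvc_int: "integrable N (\<lambda>l. pT a T x l * bv l $ i)"
proof -
  have ib: "integrable N (\<lambda>l. indicator {- (a \<bullet> x)..} (bv l \<bullet> uu T x) :: real)"
    by (rule bdd_int[of _ 1]) (simp_all split: split_indicator)
  show "integrable N (pT a T x)" unfolding pT_def using ib by simp
  have ib2: "integrable N (\<lambda>l. indicator {- (a \<bullet> x)..} (bv l \<bullet> uu T x) * bv l $ i :: real)"
    by (rule bdd_int[of _ 1]) (simp_all add: abs_mult bvc_bound mult_le_one split: split_indicator)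
  show "integrable N (\<lambda>l. pT a T x l * bv l $ i)" unfolding pT_def
    using ib2 int_bvc[of i] by (simp add: distrib_right mult.assoc)
qed

lemma pT_integrals:
  assumes H: "(a \<bullet> x)^2 + 2 * norm (\<chi> i. T$i * x$i) \<le> 1"
  shows "integral\<^sup>L N (pT a T x) = (1 + a \<bullet> x) / 2"
    and "integral\<^sup>L N (\<lambda>l. pT a T x l * bv l $ i) = T$i * x$i / 2"
proof -
  note kf = key_facts[OF H]
  have c: "-1 \<le> - (a \<bullet> x)" "- (a \<bullet> x) \<le> 1" using kf(3,4) by auto
  have ib: "integrable N (\<lambda>l. indicator {- (a \<bullet> x)..} (bv l \<bullet> uu T x) :: real)"
    by (rule bdd_int[of _ 1]) (simp_all split: split_indicator)
  have ib2: "integrable N (\<lambda>l. indicator {- (a \<bullet> x)..} (bv l \<bullet> uu T x) * bv l $ i :: real)"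
    by (rule bdd_int[of _ 1]) (simp_all add: abs_mult bvc_bound mult_le_one split: split_indicator)
  have "integral\<^sup>L N (pT a T x) = qq a T x * ((1 - - (a \<bullet> x)) / 2) + (1 - qq a T x) * ((1 + a \<bullet> x) / 2)"
  proof -
    have e: "integral\<^sup>L N (\<lambda>l. indicator {- (a \<bullet> x)..} (bv l \<bullet> uu T x) :: real) = (1 - - (a \<bullet> x)) / 2"
      by (rule C1[OF uu_norm c])
    have pu: "measure N UNIV = 1" using NP.prob_space by simp
    show ?thesis unfolding pT_def using ib by (simp add: e pu)
  qed
  then show "integral\<^sup>L N (pT a T x) = (1 + a \<bullet> x) / 2" by (simp add: field_simps)
  have "integral\<^sup>L N (\<lambda>l. pT a T x l * bv l $ i) =
     integral\<^sup>L N (\<lambda>l. qq a T x * (indicator {- (a \<bullet> x)..} (bv l \<bullet> uu T x) * bv l $ i) + ((1 - qq a T x) * ((1 + a \<bullet> x) / 2)) * bv l $ i)"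
    unfolding pT_def by (simp add: algebra_simps)
  also have "\<dots> = qq a T x * ((1 - (- (a \<bullet> x))^2) / 4 * uu T x $ i) + ((1 - qq a T x) * ((1 + a \<bullet> x) / 2)) * 0"
    using ib2 int_bvc[of i] I1[OF uu_norm c, where i=i] I2[of i] by simp
  also have "\<dots> = T$i * x$i / 2" using kf(5)[of i] by simp
  finally show "integral\<^sup>L N (\<lambda>l. pT a T x l * bv l $ i) = T$i * x$i / 2" .
qed


lemma sig_int: "integrable N sig" and sig_integral: "integral\<^sup>L N sig = BF (1/2) (\<lambda>i. 0)"
proof -
  have g: "integrable N (\<lambda>l. bv l $ i / 2)" for i using int_bvc[of i] by simp
  have f: "integrable N (\<lambda>l. 1/2 :: real)" by simp
  show "integrable N sig" unfolding sig_def using int_BF(1)[OF f g] by simp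
  have "integral\<^sup>L N sig = BF (integral\<^sup>L N (\<lambda>l. 1/2 :: real)) (\<lambda>i. integral\<^sup>L N (\<lambda>l. bv l $ i / 2))"
    unfolding sig_def using int_BF(2)[OF f g] by simp
  also have "\<dots> = BF (1/2) (\<lambda>i. 0)"
  proof -
    have pu: "measure N UNIV = 1" using NP.prob_space by simp
    show ?thesis using I2 by (simp add: pu)
  qed
  finally show "integral\<^sup>L N sig = BF (1/2) (\<lambda>i. 0)" .
qed

lemma sig_trace: "integral\<^sup>L N (\<lambda>l. trace (sig l)) = 1"
proof -
  have pu: "measure N UNIV = 1" using NP.prob_space by simp
  show ?thesis by (simp add: sig_def trace_BF pu)
qed

lemma meas_part:
  assumes H: "(a \<bullet> x)^2 + 2 * norm (\<chi> i. T$i * x$i) \<le> 1" and x: "norm x = 1"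
  shows "integrable N (\<lambda>l. pp a T x b l *\<^sub>R sig l) \<and>
         assemblage (canon_state a T) (proj_meas x b) = integral\<^sup>L N (\<lambda>l. pp a T x b l *\<^sub>R sig l)"
proof -
  define s :: real where "s = (if b then 1 else -1)"
  define P where "P l = (if b then pT a T x l else 1 - pT a T x l)" for l
  have pp: "pp a T x b l = P l" for l using x by (simp add: pp_def P_def)
  have eq: "pp a T x b l *\<^sub>R sig l = BF (P l * (1/2)) (\<lambda>i. P l * (bv l $ i / 2))" for l
    unfolding pp sig_def scaleR_BF ..
  have Pi: "integrable N P" unfolding P_def[abs_def] using pT_int[of a T x] by (cases b) simp_all
  have Pbi: "integrable N (\<lambda>l. P l * bv l $ i)" for i
    using pT_bvc_int[of a T x i] int_bvc[of i] by (cases b) (simp_all add: P_def left_diff_distrib)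
  have f: "integrable N (\<lambda>l. P l * (1/2))" using Pi by simp
  have g: "integrable N (\<lambda>l. P l * (bv l $ i / 2))" for i using Pbi[of i] by simp
  have pu: "measure N UNIV = 1" using NP.prob_space by simp
  have IP: "integral\<^sup>L N P = (1 + s * (a \<bullet> x)) / 2"
    unfolding P_def[abs_def] using pT_integrals(1)[OF H] pT_int[of a T x] by (cases b) (simp_all add: s_def pu field_simps)
  have IPb: "integral\<^sup>L N (\<lambda>l. P l * bv l $ i) = s * T$i * x$i / 2" for i
    unfolding P_def[abs_def] using pT_integrals(2)[OF H, of i] pT_bvc_int[of a T x i] int_bvc[of i] I2[of i]
    by (cases b) (simp_all add: s_def left_diff_distrib)
  show ?thesis
  proof
    show "integrable N (\<lambda>l. pp a T x b l *\<^sub>R sig l)" unfolding eq using int_BF(1)[OF f g] .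
    have "integral\<^sup>L N (\<lambda>l. pp a T x b l *\<^sub>R sig l) = BF (integral\<^sup>L N (\<lambda>l. P l * (1/2))) (\<lambda>i. integral\<^sup>L N (\<lambda>l. P l * (bv l $ i / 2)))"
      unfolding eq using int_BF(2)[OF f g] .
    also have "\<dots> = BF ((1 + s * (a \<bullet> x)) / 4) (\<lambda>i. s * T$i * x$i / 4)"
    proof -
      have "integral\<^sup>L N (\<lambda>l. P l * (bv l $ i / 2)) = s * T$i * x$i / 4" for i
        using IPb[of i] by simp
      moreover have "integral\<^sup>L N (\<lambda>l. P l * (1/2)) = (1 + s * (a \<bullet> x)) / 4" using IP by simp
      ultimately show ?thesis by (simp only:)
    qed
    also have "\<dots> = assemblage (canon_state a T) (proj_meas x b)"
      by (simp add: assemb_proj s_def)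
    finally show "assemblage (canon_state a T) (proj_meas x b) = integral\<^sup>L N (\<lambda>l. pp a T x b l *\<^sub>R sig l)" ..
  qed
qed

theorem theorem1:
  fixes \<rho>0 :: qqop and a T :: "real^3"
  assumes "is_state \<rho>0"
    and "invertible (ptraceA \<rho>0)"
    and "canonical_form_of \<rho>0 (canon_state a T)"
    and "\<forall>x::real^3. norm x = 1 \<longrightarrow>
           (a \<bullet> x)\<^sup>2 + 2 * norm (\<chi> i. T$i * x$i) \<le> 1"
  shows "unsteerable_proj (canon_state a T)"
proof -
  have H: "\<And>x. norm x = 1 \<Longrightarrow> (a \<bullet> x)\<^sup>2 + 2 * norm (\<chi> i. T$i * x$i) \<le> 1" using assms(4) by blast
  have "LHS_model_proj N sig (pp a T) (canon_state a T)"
    unfolding LHS_model_proj_def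
  proof (intro conjI allI impI ballI)
    show "psd (sig l)" for l by (rule sig_psd)
    show "integrable N sig" by (rule sig_int)
    show "integral\<^sup>L N (\<lambda>l. trace (sig l)) = 1" by (rule sig_trace)
    show "0 \<le> pp a T x b l" for x b l
      using pT_bounds[OF H, of x] by (auto simp: pp_def)
    show "pp a T x True l + pp a T x False l = 1" for x l by (simp add: pp_def)
    show "integrable N (\<lambda>l. pp a T x b l *\<^sub>R sig l)" if "norm x = 1" for x b
      using meas_part[OF H[OF that] that] by blast
    show "assemblage (canon_state a T) (proj_meas x b) = integral\<^sup>L N (\<lambda>l. pp a T x b l *\<^sub>R sig l)" if "norm x = 1" for x b
      using meas_part[OF H[OF that] that] by blast
    show "assemblage (canon_state a T) (mat 1) = integral\<^sup>L N sig"
      by (simp add: sig_integral assemb_id)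
  qed
  then show ?thesis unfolding unsteerable_proj_def by blast
qed


end
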